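(* Let $X$ be an algebraic L-space. Then $X$ is kernel-stable (i.e., $X$ is an arithmetic L-space) if and only if $U\cap V\in{\sf ClopSUp}(X)$ for all $U,V\in{\sf ClopSUp}(X)$.
   Context: A Priestley space is a Stone space $X$ with a partial order such that clopen upsets separate points. An L-space is a Priestley space in which the downset of each clopen set is clopen and the closure of each open upset is open. ${\sf ClopUp}(X)$ is the set of clopen upsets; $\mathrm{cl}$ denotes closure. The spatial part of $X$ is $Y=\{y\in X\mid{\downarrow}y\text{ clopen}\}$. A Scott upset is a closed upset $F$ with $\min F\subseteq Y$; ${\sf ClopSUp}(X)$ is the set of clopen Scott upsets. For $U,V\in{\sf ClopUp}(X)$, $V\ll U$ means that for every open upset $W$, $U\subseteq\mathrm{cl}\,W$ implies $V\subseteq W$; $\ker U=\bigcup\{V\in{\sf ClopUp}(X)\mid V\ll U\}$; $\mathrm{core}\,U=\bigcup\{V\in{\sf ClopSUp}(X)\mid V\subseteq U\}$. $X$ is an algebraic L-space if $\mathrm{core}\,U$ is dense in $U$ for each $U\in{\sf ClopUp}(X)$; it is kernel-stable if $\ker(U\cap V)=\ker U\cap\ker V$ for all $U,V\in{\sf ClopUp}(X)$. An arithmetic L-space is a kernel-stable algebraic L-space. *)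

theory Defs
  imports "HOL-Analysis.Analysis"
begin

definition clopenin :: "'a topology \<Rightarrow> 'a set \<Rightarrow> bool" where
  "clopenin T U \<longleftrightarrow> openin T U \<and> closedin T U"

definition zero_dimensional_space :: "'a topology \<Rightarrow> bool" where
  "zero_dimensional_space T \<longleftrightarrow>
     (\<forall>U. openin T U \<longrightarrow> U = \<Union>{C. clopenin T C \<and> C \<subseteq> U})"

definition stone_space :: "'a topology \<Rightarrow> bool" where
  "stone_space T \<longleftrightarrow> compact_space T \<and> Hausdorff_space T \<and> zero_dimensional_space T"

definition poset_on :: "'a set \<Rightarrow> ('a \<Rightarrow> 'a \<Rightarrow> bool) \<Rightarrow> bool" where
  "poset_on X le \<longleftrightarrow> (\<forall>x\<in>X. le x x)
     \<and> (\<forall>x\<in>X. \<forall>y\<in>X. le x y \<and> le y x \<longrightarrow> x = y)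
     \<and> (\<forall>x\<in>X. \<forall>y\<in>X. \<forall>z\<in>X. le x y \<and> le y z \<longrightarrow> le x z)"

definition upset :: "'a topology \<Rightarrow> ('a \<Rightarrow> 'a \<Rightarrow> bool) \<Rightarrow> 'a set \<Rightarrow> bool" where
  "upset T le U \<longleftrightarrow> U \<subseteq> topspace T \<and> (\<forall>x\<in>U. \<forall>y\<in>topspace T. le x y \<longrightarrow> y \<in> U)"

definition downset_of :: "'a topology \<Rightarrow> ('a \<Rightarrow> 'a \<Rightarrow> bool) \<Rightarrow> 'a set \<Rightarrow> 'a set" where
  "downset_of T le A = {y \<in> topspace T. \<exists>x\<in>A. le y x}"

definition ClopUp :: "'a topology \<Rightarrow> ('a \<Rightarrow> 'a \<Rightarrow> bool) \<Rightarrow> 'a set set" where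
  "ClopUp T le = {U. clopenin T U \<and> upset T le U}"

definition priestley_space :: "'a topology \<Rightarrow> ('a \<Rightarrow> 'a \<Rightarrow> bool) \<Rightarrow> bool" where
  "priestley_space T le \<longleftrightarrow> stone_space T \<and> poset_on (topspace T) le
     \<and> (\<forall>x\<in>topspace T. \<forall>y\<in>topspace T. \<not> le x y \<longrightarrow>
           (\<exists>U\<in>ClopUp T le. x \<in> U \<and> y \<notin> U))"

definition L_space :: "'a topology \<Rightarrow> ('a \<Rightarrow> 'a \<Rightarrow> bool) \<Rightarrow> bool" where
  "L_space T le \<longleftrightarrow> priestley_space T le
     \<and> (\<forall>U. clopenin T U \<longrightarrow> clopenin T (downset_of T le U))
     \<and> (\<forall>U. openin T U \<and> upset T le U \<longrightarrow> openin T (T closure_of U))"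

definition spatial_part :: "'a topology \<Rightarrow> ('a \<Rightarrow> 'a \<Rightarrow> bool) \<Rightarrow> 'a set" where
  "spatial_part T le = {y \<in> topspace T. clopenin T (downset_of T le {y})}"

definition minimals :: "('a \<Rightarrow> 'a \<Rightarrow> bool) \<Rightarrow> 'a set \<Rightarrow> 'a set" where
  "minimals le F = {x \<in> F. \<forall>y\<in>F. le y x \<longrightarrow> y = x}"

definition scott_upset :: "'a topology \<Rightarrow> ('a \<Rightarrow> 'a \<Rightarrow> bool) \<Rightarrow> 'a set \<Rightarrow> bool" where
  "scott_upset T le F \<longleftrightarrow> closedin T F \<and> upset T le F \<and> minimals le F \<subseteq> spatial_part T le"

definition ClopSUp :: "'a topology \<Rightarrow> ('a \<Rightarrow> 'a \<Rightarrow> bool) \<Rightarrow> 'a set set" where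
  "ClopSUp T le = {U. clopenin T U \<and> scott_upset T le U}"

definition way_below :: "'a topology \<Rightarrow> ('a \<Rightarrow> 'a \<Rightarrow> bool) \<Rightarrow> 'a set \<Rightarrow> 'a set \<Rightarrow> bool" where
  "way_below T le V U \<longleftrightarrow> V \<in> ClopUp T le \<and> U \<in> ClopUp T le \<and>
     (\<forall>W. openin T W \<and> upset T le W \<and> U \<subseteq> T closure_of W \<longrightarrow> V \<subseteq> W)"

definition ker :: "'a topology \<Rightarrow> ('a \<Rightarrow> 'a \<Rightarrow> bool) \<Rightarrow> 'a set \<Rightarrow> 'a set" where
  "ker T le U = \<Union>{V \<in> ClopUp T le. way_below T le V U}"

definition core :: "'a topology \<Rightarrow> ('a \<Rightarrow> 'a \<Rightarrow> bool) \<Rightarrow> 'a set \<Rightarrow> 'a set" where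
  "core T le U = \<Union>{V \<in> ClopSUp T le. V \<subseteq> U}"

definition algebraic_L_space :: "'a topology \<Rightarrow> ('a \<Rightarrow> 'a \<Rightarrow> bool) \<Rightarrow> bool" where
  "algebraic_L_space T le \<longleftrightarrow> L_space T le
     \<and> (\<forall>U\<in>ClopUp T le. U \<subseteq> T closure_of (core T le U))"

definition kernel_stable :: "'a topology \<Rightarrow> ('a \<Rightarrow> 'a \<Rightarrow> bool) \<Rightarrow> bool" where
  "kernel_stable T le \<longleftrightarrow>
     (\<forall>U\<in>ClopUp T le. \<forall>V\<in>ClopUp T le. ker T le (U \<inter> V) = ker T le U \<inter> ker T le V)"

definition arithmetic_L_space :: "'a topology \<Rightarrow> ('a \<Rightarrow> 'a \<Rightarrow> bool) \<Rightarrow> bool" where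
  "arithmetic_L_space T le \<longleftrightarrow> algebraic_L_space T le \<and> kernel_stable T le"

end

theory Submission
  imports Defs
begin

lemma downset_closed:
  assumes P: "priestley_space T le" and a: "a \<in> topspace T"
  shows "closedin T (downset_of T le {a})"
proof -
  have "openin T (topspace T - downset_of T le {a})"
  proof (subst openin_subopen, intro ballI)
    fix y assume y: "y \<in> topspace T - downset_of T le {a}"
    then have "\<not> le y a" by (auto simp: downset_of_def)
    then obtain U where U: "U \<in> ClopUp T le" "y \<in> U" "a \<notin> U"
      using P y a unfolding priestley_space_def by blast
    have "U \<subseteq> topspace T - downset_of T le {a}"
      using U a unfolding ClopUp_def upset_def downset_of_def by auto
    moreover have "openin T U" using U unfolding ClopUp_def clopenin_def by auto
    ultimately show "\<exists>T'. openin T T' \<and> y \<in> T' \<and> T' \<subseteq> topspace T - downset_of T le {a}"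
      using U by blast
  qed
  then show ?thesis unfolding closedin_def downset_of_def by auto
qed

lemma finite_chain_min:
  assumes "finite C'" "C' \<noteq> {}"
    and ch: "\<And>a b. a \<in> C' \<Longrightarrow> b \<in> C' \<Longrightarrow> le a b \<or> le b a"
    and tr: "\<And>a b c. a \<in> C' \<Longrightarrow> b \<in> C' \<Longrightarrow> c \<in> C' \<Longrightarrow> le a b \<Longrightarrow> le b c \<Longrightarrow> le a c"
    and rf: "\<And>a. a \<in> C' \<Longrightarrow> le a a"
  shows "\<exists>c\<in>C'. \<forall>a\<in>C'. le c a"
  using assms
proof (induction C' rule: finite_ne_induct)
  case (singleton x)
  show ?case using singleton.prems(3)[of x] by blast
next
  case (insert b F)
  have "\<exists>c\<in>F. \<forall>a\<in>F. le c a"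
  proof (rule insert.IH)
    show "\<And>a b. a \<in> F \<Longrightarrow> b \<in> F \<Longrightarrow> le a b \<or> le b a"
      using insert.prems(1) by blast
    show "\<And>a b c. a \<in> F \<Longrightarrow> b \<in> F \<Longrightarrow> c \<in> F \<Longrightarrow> le a b \<Longrightarrow> le b c \<Longrightarrow> le a c"
      using insert.prems(2) by blast
    show "\<And>a. a \<in> F \<Longrightarrow> le a a" using insert.prems(3) by blast
  qed
  then obtain c where c: "c \<in> F" "\<And>a. a \<in> F \<Longrightarrow> le c a" by blast
  have bb: "le b b" by (rule insert.prems(3)) simp
  show ?case
  proof (cases "le b c")
    case True
    have "le b a" if "a \<in> insert b F" for a
    proof (cases "a = b")
      case True then show ?thesis using bb by blast
    next
      case False
      then have aF: "a \<in> F" using that by blast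
      show ?thesis
        using insert.prems(2)[of b c a] c aF \<open>le b c\<close> by blast
    qed
    then show ?thesis by blast
  next
    case False
    then have cb: "le c b" using insert.prems(1)[of b c] c by blast
    have "le c a" if "a \<in> insert b F" for a
      using that cb c by blast
    then show ?thesis using c by blast
  qed
qed

lemma exists_minimal:
  assumes P: "priestley_space T le" and K: "closedin T K" and x: "x \<in> K"
  shows "\<exists>m\<in>minimals le K. le m x"
proof -
  have KT: "K \<subseteq> topspace T" using K closedin_subset by auto
  have po: "poset_on (topspace T) le" using P unfolding priestley_space_def by auto
  have prefl: "\<And>a. a \<in> topspace T \<Longrightarrow> le a a" using po unfolding poset_on_def by blast
  have pas: "\<And>a b. a \<in> topspace T \<Longrightarrow> b \<in> topspace T \<Longrightarrow> le a b \<Longrightarrow> le b a \<Longrightarrow> a = b"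
    using po unfolding poset_on_def by blast
  have ptr: "\<And>a b c. a \<in> topspace T \<Longrightarrow> b \<in> topspace T \<Longrightarrow> c \<in> topspace T \<Longrightarrow> le a b \<Longrightarrow> le b c \<Longrightarrow> le a c"
    using po unfolding poset_on_def by blast
  have cs: "compact_space T" using P unfolding priestley_space_def stone_space_def by auto
  define A where "A = {y \<in> K. le y x}"
  define Q where "Q = (\<lambda>a b. le b a)"
  have xT: "x \<in> topspace T" using x KT by auto
  have AT: "\<And>a. a \<in> A \<Longrightarrow> a \<in> topspace T" using KT A_def by auto
  have "partial_order_on A (relation_of Q A)"
    unfolding partial_order_on_def preorder_on_def
  proof (intro conjI)
    show "relation_of Q A \<subseteq> A \<times> A" unfolding relation_of_def by auto
    show "refl_on A (relation_of Q A)" unfolding refl_on_def relation_of_def Q_def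
      using prefl AT by auto
    show "trans (relation_of Q A)" unfolding relation_of_def Q_def
    proof (rule transI)
      fix a b c
      assume "(a, b) \<in> {(a, b). (a, b) \<in> A \<times> A \<and> le b a}" "(b, c) \<in> {(a, b). (a, b) \<in> A \<times> A \<and> le b a}"
      then have h: "a \<in> A" "b \<in> A" "c \<in> A" "le b a" "le c b" by auto
      then have "le c a" using ptr[of c b a] AT by blast
      then show "(a, c) \<in> {(a, b). (a, b) \<in> A \<times> A \<and> le b a}" using h by auto
    qed
    show "antisym (relation_of Q A)" unfolding relation_of_def Q_def
    proof (rule antisymI)
      fix a b
      assume "(a, b) \<in> {(a, b). (a, b) \<in> A \<times> A \<and> le b a}" "(b, a) \<in> {(a, b). (a, b) \<in> A \<times> A \<and> le b a}"
      then have h: "a \<in> A" "b \<in> A" "le b a" "le a b" by auto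
      then show "a = b" using pas[of a b] AT by blast
    qed
  qed
  then have "\<exists>m \<in> A. \<forall>a \<in> A. Q m a \<longrightarrow> a = m"
  proof (rule predicate_Zorn)
    fix C assume C: "C \<in> Chains (relation_of Q A)"
    have CA: "C \<subseteq> A" using C unfolding Chains_def relation_of_def by auto
    have chC: "\<And>a b. a \<in> C \<Longrightarrow> b \<in> C \<Longrightarrow> le a b \<or> le b a"
      using C unfolding Chains_def relation_of_def Q_def by auto
    show "\<exists>u\<in>A. \<forall>a\<in>C. Q a u"
    proof (cases "C = {}")
      case True
      then show ?thesis using x prefl[OF xT] unfolding A_def by auto
    next
      case False
      define U where "U = (\<lambda>a. downset_of T le {a}) ` C"
      have ck: "compactin T K" using K cs closedin_compact_space by blast
      have "K \<inter> \<Inter>U \<noteq> {}"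
      proof (rule ck[unfolded compactin_fip, THEN conjunct2, rule_format], intro conjI allI impI)
        show "\<forall>D\<in>U. closedin T D" unfolding U_def using downset_closed[OF P] CA AT by auto
      next
        fix F assume F: "finite F \<and> F \<subseteq> U"
        then obtain C' where C': "C' \<subseteq> C" "finite C'" "F = (\<lambda>a. downset_of T le {a}) ` C'"
          unfolding U_def by (meson finite_subset_image)
        have C'T: "\<And>a. a \<in> C' \<Longrightarrow> a \<in> topspace T" using C' CA AT by blast
        show "K \<inter> \<Inter>F \<noteq> {}"
        proof (cases "C' = {}")
          case True then show ?thesis using C' x by auto
        next
          case False
          have "\<exists>c\<in>C'. \<forall>a\<in>C'. le c a"
          proof (rule finite_chain_min[OF C'(2) False])
            show "\<And>a b. a \<in> C' \<Longrightarrow> b \<in> C' \<Longrightarrow> le a b \<or> le b a" using chC C'(1) by blast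
            show "\<And>a b c. a \<in> C' \<Longrightarrow> b \<in> C' \<Longrightarrow> c \<in> C' \<Longrightarrow> le a b \<Longrightarrow> le b c \<Longrightarrow> le a c"
              using ptr C'T by blast
            show "\<And>a. a \<in> C' \<Longrightarrow> le a a" using prefl C'T by blast
          qed
          then obtain c where c: "c \<in> C'" "\<forall>a\<in>C'. le c a" by blast
          have "c \<in> A" using c C' CA by blast
          then have "c \<in> K" "c \<in> topspace T" using AT A_def by auto
          then have "c \<in> K \<inter> \<Inter>F" using c C' unfolding downset_of_def by auto
          then show ?thesis by blast
        qed
      qed
      then obtain u where u: "u \<in> K" "\<forall>D\<in>U. u \<in> D" by blast
      have le_u: "\<forall>a\<in>C. le u a" using u unfolding U_def downset_of_def by auto
      obtain a where a: "a \<in> C" using False by blast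
      have aA: "a \<in> A" using a CA by blast
      have "le u x"
        by (rule ptr[of u a x]) (use u KT aA AT xT le_u a A_def in auto)
      then show ?thesis using u le_u unfolding A_def Q_def by auto
    qed
  qed
  then obtain m where m: "m \<in> A" "\<forall>a\<in>A. le a m \<longrightarrow> a = m" unfolding Q_def by blast
  have mK: "m \<in> K" "le m x" using m A_def by auto
  have "m \<in> minimals le K"
    unfolding minimals_def
  proof (intro CollectI conjI ballI impI)
    show "m \<in> K" using mK by auto
    fix y assume y: "y \<in> K" "le y m"
    have "le y x" by (rule ptr[of y m x]) (use y mK KT xT in auto)
    then show "y = m" using m y A_def by auto
  qed
  then show ?thesis using mK by auto
qed

lemma wb_self:
  assumes P: "priestley_space T le" and K: "K \<in> ClopSUp T le"
  shows "way_below T le K K"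
proof -
  have KC: "K \<in> ClopUp T le" using K unfolding ClopSUp_def ClopUp_def scott_upset_def by auto
  have po: "poset_on (topspace T) le" using P unfolding priestley_space_def by auto
  have Kc: "closedin T K" "upset T le K" "minimals le K \<subseteq> spatial_part T le"
    using K unfolding ClopSUp_def scott_upset_def by auto
  have "K \<subseteq> W" if W: "openin T W" "upset T le W" "K \<subseteq> T closure_of W" for W
  proof
    fix x assume x: "x \<in> K"
    obtain m where m: "m \<in> minimals le K" "le m x" using exists_minimal[OF P Kc(1) x] by blast
    have mK: "m \<in> K" using m unfolding minimals_def by auto
    have mY: "m \<in> spatial_part T le" using m Kc by auto
    then have op: "openin T (downset_of T le {m})" and mT: "m \<in> topspace T"
      unfolding spatial_part_def clopenin_def by auto
    have "m \<in> downset_of T le {m}" using mT po unfolding downset_of_def poset_on_def by auto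
    moreover have "m \<in> T closure_of W" using mK W(3) by blast
    ultimately obtain w where w: "w \<in> W" "w \<in> downset_of T le {m}"
      using op unfolding in_closure_of by blast
    have "m \<in> W" using w W(2) mT unfolding upset_def downset_of_def by auto
    moreover have "x \<in> topspace T" using x Kc(2) unfolding upset_def by auto
    ultimately show "x \<in> W" using W(2) m unfolding upset_def by auto
  qed
  then show ?thesis unfolding way_below_def using KC by blast
qed

lemma ker_sub_core:
  assumes A: "algebraic_L_space T le" and U: "U \<in> ClopUp T le"
  shows "ker T le U \<subseteq> core T le U"
proof
  have cl: "U \<subseteq> T closure_of (core T le U)" using A U unfolding algebraic_L_space_def by auto
  have op: "openin T (core T le U)"
    unfolding core_def ClopSUp_def clopenin_def by (rule openin_Union) auto
  have up: "upset T le (core T le U)"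
    unfolding core_def ClopSUp_def scott_upset_def upset_def by blast
  fix x assume "x \<in> ker T le U"
  then obtain V where V: "V \<in> ClopUp T le" "way_below T le V U" "x \<in> V"
    unfolding ker_def by blast
  have "V \<subseteq> core T le U"
    using V(2) cl op up unfolding way_below_def by blast
  then show "x \<in> core T le U" using V(3) by blast
qed

lemma core_sub_ker:
  assumes P: "priestley_space T le" and U: "U \<in> ClopUp T le"
  shows "core T le U \<subseteq> ker T le U"
proof
  fix x assume "x \<in> core T le U"
  then obtain K where K: "K \<in> ClopSUp T le" "K \<subseteq> U" "x \<in> K" unfolding core_def by auto
  have wk: "way_below T le K K" using wb_self[OF P K(1)] .
  have "way_below T le K U"
    unfolding way_below_def
  proof (intro conjI allI impI)
    show "K \<in> ClopUp T le" using wk unfolding way_below_def by blast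
    show "U \<in> ClopUp T le" by (rule U)
    fix W assume W: "openin T W \<and> upset T le W \<and> U \<subseteq> T closure_of W"
    then have "K \<subseteq> T closure_of W" using K(2) by blast
    then show "K \<subseteq> W" using wk W unfolding way_below_def by blast
  qed
  then have "K \<in> {V \<in> ClopUp T le. way_below T le V U}" using wk unfolding way_below_def by blast
  then show "x \<in> ker T le U" using K(3) unfolding ker_def by blast
qed

lemma ker_mono:
  assumes U': "U' \<in> ClopUp T le" and sub: "U \<subseteq> U'"
  shows "ker T le U \<subseteq> ker T le U'"
proof
  fix x assume "x \<in> ker T le U"
  then obtain V where V: "V \<in> ClopUp T le" "way_below T le V U" "x \<in> V"
    unfolding ker_def by blast
  have "way_below T le V U'"
    unfolding way_below_def
  proof (intro conjI allI impI)
    show "V \<in> ClopUp T le" by (rule V(1))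
    show "U' \<in> ClopUp T le" by (rule U')
    fix W assume W: "openin T W \<and> upset T le W \<and> U' \<subseteq> T closure_of W"
    then have "U \<subseteq> T closure_of W" using sub by blast
    then show "V \<subseteq> W" using V(2) W unfolding way_below_def by blast
  qed
  then show "x \<in> ker T le U'" using V unfolding ker_def by blast
qed

lemma ClopUp_Int:
  "U \<in> ClopUp T le \<Longrightarrow> V \<in> ClopUp T le \<Longrightarrow> U \<inter> V \<in> ClopUp T le"
  unfolding ClopUp_def clopenin_def upset_def by auto

theorem lemma5p2:
  fixes T :: "'a topology" and le :: "'a \<Rightarrow> 'a \<Rightarrow> bool"
  assumes "algebraic_L_space T le"
  shows "kernel_stable T le \<longleftrightarrow>
           (\<forall>U\<in>ClopSUp T le. \<forall>V\<in>ClopSUp T le. U \<inter> V \<in> ClopSUp T le)"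
proof -
  have P: "priestley_space T le" using assms unfolding algebraic_L_space_def L_space_def by auto
  have SC: "\<And>K. K \<in> ClopSUp T le \<Longrightarrow> K \<in> ClopUp T le"
    unfolding ClopSUp_def ClopUp_def scott_upset_def by auto
  show ?thesis
  proof
    assume ks: "kernel_stable T le"
    show "\<forall>U\<in>ClopSUp T le. \<forall>V\<in>ClopSUp T le. U \<inter> V \<in> ClopSUp T le"
    proof (intro ballI)
      fix U V assume U: "U \<in> ClopSUp T le" and V: "V \<in> ClopSUp T le"
      have UV: "U \<inter> V \<in> ClopUp T le" using ClopUp_Int SC U V by blast
      have "U \<subseteq> ker T le U" using wb_self[OF P U] SC[OF U] unfolding ker_def by blast
      moreover have "V \<subseteq> ker T le V" using wb_self[OF P V] SC[OF V] unfolding ker_def by blast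
      ultimately have "U \<inter> V \<subseteq> ker T le (U \<inter> V)"
        using ks SC U V unfolding kernel_stable_def by blast
      then have sub: "U \<inter> V \<subseteq> core T le (U \<inter> V)" using ker_sub_core[OF assms UV] by blast
      have "minimals le (U \<inter> V) \<subseteq> spatial_part T le"
      proof
        fix x assume x: "x \<in> minimals le (U \<inter> V)"
        then have "x \<in> core T le (U \<inter> V)" using sub unfolding minimals_def by auto
        then obtain K where K: "K \<in> ClopSUp T le" "K \<subseteq> U \<inter> V" "x \<in> K" unfolding core_def by auto
        have "x \<in> minimals le K" using x K unfolding minimals_def by auto
        then show "x \<in> spatial_part T le" using K unfolding ClopSUp_def scott_upset_def by auto
      qed
      then show "U \<inter> V \<in> ClopSUp T le" using UV
        unfolding ClopSUp_def ClopUp_def scott_upset_def clopenin_def by auto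
    qed
  next
    assume H: "\<forall>U\<in>ClopSUp T le. \<forall>V\<in>ClopSUp T le. U \<inter> V \<in> ClopSUp T le"
    show "kernel_stable T le" unfolding kernel_stable_def
    proof (intro ballI equalityI)
      fix U V assume U: "U \<in> ClopUp T le" and V: "V \<in> ClopUp T le"
      show "ker T le (U \<inter> V) \<subseteq> ker T le U \<inter> ker T le V"
        using ker_mono[OF U, of "U \<inter> V"] ker_mono[OF V, of "U \<inter> V"] by blast
      have "core T le U \<inter> core T le V \<subseteq> core T le (U \<inter> V)"
      proof
        fix x assume "x \<in> core T le U \<inter> core T le V"
        then obtain K1 K2 where "K1 \<in> ClopSUp T le" "K1 \<subseteq> U" "x \<in> K1"
          "K2 \<in> ClopSUp T le" "K2 \<subseteq> V" "x \<in> K2" unfolding core_def by auto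
        then show "x \<in> core T le (U \<inter> V)" using H unfolding core_def
          by (intro UnionI[of "K1 \<inter> K2"]) auto
      qed
      then show "ker T le U \<inter> ker T le V \<subseteq> ker T le (U \<inter> V)"
        using ker_sub_core[OF assms U] ker_sub_core[OF assms V]
          core_sub_ker[OF P ClopUp_Int[OF U V]] by blast
    qed
  qed
qed

end
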